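(* Let $(r_n)_{n\in\mathbb N}\subset L^0_+$ with $r_n\neq0$ for all $n$, and suppose that the set $\{\sup_{n\in\mathbb N}r_n>0\}$ is atomless (contains no atom of $\mathbb P$). Then there exists $r\in L^0_{++}$ such that $\mathbb P(r_n\ge r)>0$ for all $n\in\mathbb N$.
   Context: $(\Omega,\mathcal F,\mathbb P)$ is a probability space, $L^0$ the real-valued measurable functions modulo a.e. equality with a.e. order, $L^0_+=\{r\ge0\}$, $L^0_{++}=\{r>0\text{ a.e.}\}$; $\sup$ denotes the essential supremum. $r_n\ne0$ means $\mathbb P(r_n\ne 0)>0$. *)

theory Defs
  imports "HOL-Probability.Probability"
begin

definition is_atom :: "'a measure \<Rightarrow> 'a set \<Rightarrow> bool" where
  "is_atom M A \<longleftrightarrow> A \<in> sets M \<and> measure M A > 0 \<and>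
     (\<forall>B\<in>sets M. B \<subseteq> A \<longrightarrow> measure M B = 0 \<or> measure M B = measure M A)"

definition atomless_set :: "'a measure \<Rightarrow> 'a set \<Rightarrow> bool" where
  "atomless_set M S \<longleftrightarrow> \<not> (\<exists>A. is_atom M A \<and> A \<subseteq> S)"

end

theory Submission
  imports Defs
begin

lemma small_subset:
  assumes P: "prob_space M" and al: "atomless_set M S"
    and C: "C \<in> sets M" "C \<subseteq> S" "measure M C > 0"
  shows "\<exists>D\<in>sets M. D \<subseteq> C \<and> 0 < measure M D \<and> measure M D \<le> measure M C / 2^k"
proof (induction k)
  case 0
  then show ?case using C by auto
next
  case (Suc k)
  then obtain D where D: "D \<in> sets M" "D \<subseteq> C" "0 < measure M D" "measure M D \<le> measure M C / 2^k"
    by blast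
  interpret prob_space M by (rule P)
  have "\<not> is_atom M D" using al D C unfolding atomless_set_def by blast
  then obtain B where B: "B \<in> sets M" "B \<subseteq> D" "measure M B \<noteq> 0" "measure M B \<noteq> measure M D"
    using D unfolding is_atom_def by blast
  have "measure M B \<le> measure M D" using B D by (intro finite_measure_mono) auto
  with B have B1: "0 < measure M B" "measure M B < measure M D"
    using measure_nonneg[of M B] by linarith+
  have DB: "measure M (D - B) = measure M D - measure M B"
    using B D by (intro finite_measure_Diff) auto
  show ?case
  proof (cases "measure M B \<le> measure M D / 2")
    case True
    have "measure M B * 2^k \<le> measure M D / 2 * 2^k" using True by (intro mult_right_mono) auto
    also have "\<dots> \<le> measure M C / 2" using D(4) by (simp add: field_simps)
    finally have "measure M B \<le> measure M C / 2 ^ Suc k" by (simp add: field_simps)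
    then show ?thesis using B B1 D by (intro bexI[of _ B]) auto
  next
    case False
    then have F: "measure M (D - B) \<le> measure M D / 2" using DB by linarith
    have "measure M (D - B) * 2^k \<le> measure M D / 2 * 2^k" using F by (intro mult_right_mono) auto
    also have "\<dots> \<le> measure M C / 2" using D(4) by (simp add: field_simps)
    finally have "measure M (D - B) \<le> measure M C / 2 ^ Suc k" by (simp add: field_simps)
    then show ?thesis using B B1 D DB by (intro bexI[of _ "D - B"]) auto
  qed
qed

theorem lemma5p1:
  fixes M :: "'a measure" and r :: "nat \<Rightarrow> 'a \<Rightarrow> real"
  assumes "prob_space M"
    and meas: "\<And>n. r n \<in> borel_measurable M"
    and nonneg: "\<And>n. AE x in M. r n x \<ge> 0"
    and nonzero: "\<And>n. measure M {x \<in> space M. r n x \<noteq> 0} > 0"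
    and atomless: "atomless_set M {x \<in> space M. (SUP n. ereal (r n x)) > 0}"
  shows "\<exists>s. s \<in> borel_measurable M \<and> (AE x in M. s x > 0) \<and>
             (\<forall>n. measure M {x \<in> space M. r n x \<ge> s x} > 0)"
proof -
  interpret prob_space M by (rule assms(1))
  note [measurable] = meas
  define S where "S = {x \<in> space M. (SUP n. ereal (r n x)) > 0}"
  have thr: "\<exists>e>0. measure M {x\<in>space M. e \<le> r n x} > 0" for n
  proof (rule ccontr)
    assume neg: "\<not> ?thesis"
    have z: "measure M {x\<in>space M. 1 / real (Suc k) \<le> r n x} = 0" for k
    proof -
      have "\<not> measure M {x\<in>space M. 1 / real (Suc k) \<le> r n x} > 0"
        using neg by (metis of_nat_0_less_iff zero_less_Suc zero_less_divide_1_iff)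
      then show ?thesis using measure_nonneg[of M "{x\<in>space M. 1 / real (Suc k) \<le> r n x}"] by linarith
    qed
    have N1: "{x\<in>space M. r n x < 0} \<in> null_sets M"
    proof -
      have "{x\<in>space M. \<not> 0 \<le> r n x} \<in> sets M" by measurable
      then have "{x\<in>space M. \<not> 0 \<le> r n x} \<in> null_sets M"
        using AE_iff_null[of M "\<lambda>x. 0 \<le> r n x"] nonneg[of n] by simp
      then show ?thesis by (simp add: not_le)
    qed
    have N2: "(\<Union>k. {x\<in>space M. 1 / real (Suc k) \<le> r n x}) \<in> null_sets M"
    proof (intro null_sets_UN)
      fix k
      have m: "{x\<in>space M. 1 / real (Suc k) \<le> r n x} \<in> sets M" by measurable
      show "{x\<in>space M. 1 / real (Suc k) \<le> r n x} \<in> null_sets M"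
        using m z[of k] by (intro null_setsI) (simp_all add: emeasure_eq_measure)
    qed
    have sub: "{x \<in> space M. r n x \<noteq> 0} \<subseteq> {x\<in>space M. r n x < 0} \<union> (\<Union>k. {x\<in>space M. 1 / real (Suc k) \<le> r n x})"
    proof
      fix x assume x: "x \<in> {x \<in> space M. r n x \<noteq> 0}"
      show "x \<in> {x\<in>space M. r n x < 0} \<union> (\<Union>k. {x\<in>space M. 1 / real (Suc k) \<le> r n x})"
      proof (cases "r n x < 0")
        case False
        then have "r n x > 0" using x by auto
        then obtain k where "1 / real (Suc k) < r n x" using nat_approx_posE by blast
        then have "1 / real (Suc k) \<le> r n x" by simp
        then show ?thesis using x by blast
      qed (use x in auto)
    qed
    have "{x \<in> space M. r n x \<noteq> 0} \<in> null_sets M"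
      by (rule null_sets_subset[OF null_sets.Un[OF N1 N2] _ sub]) measurable
    then show False using nonzero[of n] by (simp add: measure_eq_0_null_sets)
  qed
  then obtain eps where eps: "\<And>n. eps n > 0" "\<And>n. measure M {x\<in>space M. eps n \<le> r n x} > 0"
    by metis
  define C where "C n = {x\<in>space M. eps n \<le> r n x}" for n
  have Cm: "C n \<in> sets M" for n unfolding C_def by measurable
  have CS: "C n \<subseteq> S" for n
  proof
    fix x assume x: "x \<in> C n"
    have "ereal 0 < ereal (r n x)" using x eps(1)[of n] by (auto simp: C_def)
    also have "\<dots> \<le> (SUP n. ereal (r n x))" by (rule SUP_upper) auto
    finally show "x \<in> S" using x by (auto simp: S_def C_def zero_ereal_def)
  qed
  have "\<exists>D\<in>sets M. D \<subseteq> C n \<and> 0 < measure M D \<and> measure M D \<le> measure M (C n) / 2^n" for n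
    using small_subset[OF assms(1) atomless[folded S_def] Cm CS] eps(2) by (auto simp: C_def)
  then obtain D where D: "\<And>n. D n \<in> sets M" "\<And>n. D n \<subseteq> C n" "\<And>n. 0 < measure M (D n)"
    "\<And>n. measure M (D n) \<le> measure M (C n) / 2^n" by metis
  have Dle: "measure M (D n) \<le> (1/2)^n" for n
  proof -
    have "measure M (D n) \<le> measure M (C n) / 2^n" by (rule D(4))
    also have "\<dots> \<le> 1 / 2^n" by (intro divide_right_mono) auto
    finally show ?thesis by (simp add: power_one_over)
  qed
  have summ: "summable (\<lambda>n. measure M (D n))"
    by (rule summable_comparison_test[of _ "\<lambda>n. (1/2::real)^n"]) (use Dle in auto)
  have AEev: "AE x in M. eventually (\<lambda>n. x \<in> space M - D n) sequentially"
    using D(1) summ by (intro borel_cantelli_AE1) (auto simp: less_top[symmetric])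
  define t where "t x = (INF n. if x \<in> D n then ereal (eps n) else 1)" for x
  define s where "s x = real_of_ereal (t x)" for x
  have tm: "t \<in> borel_measurable M" unfolding t_def using D(1) by measurable
  have sm: "s \<in> borel_measurable M" unfolding s_def using tm by measurable
  have t0: "0 \<le> t x" for x unfolding t_def
  proof (rule INF_greatest)
    fix n show "0 \<le> (if x \<in> D n then ereal (eps n) else 1)"
      using eps(1)[of n] by auto
  qed
  have tfin: "t x < \<infinity>" for x
  proof -
    have "t x \<le> (if x \<in> D 0 then ereal (eps 0) else 1)" unfolding t_def by (rule INF_lower) auto
    then show ?thesis by (auto split: if_splits)
  qed
  have s_le: "s x \<le> eps n" if "x \<in> D n" for x n
  proof -
    have "t x \<le> ereal (eps n)" unfolding t_def using that by (intro INF_lower2[of n]) auto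
    then show ?thesis unfolding s_def using t0[of x] tfin[of x]
      by (cases "t x") auto
  qed
  have pos: "AE x in M. s x > 0"
    using AEev
  proof (rule AE_mp, intro AE_I2 impI)
    fix x assume "x \<in> space M" "eventually (\<lambda>n. x \<in> space M - D n) sequentially"
    then obtain N where N: "\<And>m. m \<ge> N \<Longrightarrow> x \<notin> D m" by (auto simp: eventually_sequentially)
    define c where "c = Min (insert 1 (eps ` {..<N}))"
    have c0: "c > 0" unfolding c_def using eps(1) by (subst Min_gr_iff) auto
    have "ereal c \<le> t x" unfolding t_def
    proof (rule INF_greatest)
      fix m :: nat assume "m \<in> UNIV"
      show "ereal c \<le> (if x \<in> D m then ereal (eps m) else 1)"
      proof (cases "x \<in> D m")
        case True
        then have "m < N" using N by (metis not_le)
        then have "c \<le> eps m" unfolding c_def by (intro Min_le) auto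
        then show ?thesis using True by auto
      next
        case False
        have "c \<le> 1" unfolding c_def by (intro Min_le) auto
        then show ?thesis using False by (simp add: one_ereal_def)
      qed
    qed
    then show "s x > 0" unfolding s_def using c0 tfin[of x] by (cases "t x") auto
  qed
  have "measure M {x \<in> space M. r n x \<ge> s x} > 0" for n
  proof -
    have "D n \<subseteq> {x \<in> space M. r n x \<ge> s x}"
      using D(2)[of n] s_le[of _ n] by (force simp: C_def intro: order_trans)
    then have "measure M (D n) \<le> measure M {x \<in> space M. r n x \<ge> s x}"
      using D(1) sm by (intro finite_measure_mono) measurable
    then show ?thesis using D(3)[of n] by linarith
  qed
  then show ?thesis using sm pos by blast
qed

end
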